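(* Let $\epsilon_1,\dots,\epsilon_n$ ($n\ge3$) be directed edges of $\vec\Gamma$ forming a loop, i.e. $t(\epsilon_k)=s(\epsilon_{k+1})$ for $1\le k<n$ and $t(\epsilon_n)=s(\epsilon_1)$. Then $$\mathrm{Tr}(X_{\epsilon_1}\cdots X_{\epsilon_n})=\frac{1}{\sqrt{\mu(s(\epsilon_n))\mu(t(\epsilon_n))}}\sum_{\substack{1\le j\le n-1,\ \epsilon_j=\epsilon_n^{op}\\ j\notin\{1,n-1\}}}\mathrm{Tr}(X_{\epsilon_1}\cdots X_{\epsilon_{j-1}})\,\mathrm{Tr}(X_{\epsilon_{j+1}}\cdots X_{\epsilon_{n-1}})$$ $$+\ \delta_{\epsilon_{n-1},\epsilon_n^{op}}\sqrt{\tfrac{\mu(s(\epsilon_n))}{\mu(t(\epsilon_n))}}\,\mathrm{Tr}(X_{\epsilon_1}\cdots X_{\epsilon_{n-2}})+\delta_{\epsilon_1,\epsilon_n^{op}}\sqrt{\tfrac{\mu(t(\epsilon_n))}{\mu(s(\epsilon_n))}}\,\mathrm{Tr}(X_{\epsilon_2}\cdots X_{\epsilon_{n-1}}).$$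
   Context: $\Gamma$ is a countable, connected, undirected, locally finite graph (loops and multiple edges allowed) with vertex set $V$, edge set $E$, weighting $\mu:V\to(0,\infty)$. The directed version $\vec\Gamma$ has vertices $V$; each edge $e$ with distinct endpoints $\alpha\neq\beta$ yields directed edges $\epsilon,\epsilon^{op}$ with $s(\epsilon)=t(\epsilon^{op})=\alpha$, $t(\epsilon)=s(\epsilon^{op})=\beta$; each loop $e$ at $\gamma$ yields one directed loop $\epsilon=\epsilon^{op}$. Let $\mathcal C=C_0(V)$ with $p_\alpha$ the indicator of $\alpha$; $\mathcal X$ the Hilbert $\mathcal C$-$\mathcal C$ bimodule spanned by directed edges with $p_\alpha\epsilon=\delta_{s(\epsilon),\alpha}\epsilon$, $\epsilon p_\alpha=\delta_{t(\epsilon),\alpha}\epsilon$, $\langle\epsilon'|\epsilon\rangle=\delta_{\epsilon,\epsilon'}p_{t(\epsilon)}$; $\mathcal F(\mathcal X)=\mathcal C\oplus\bigoplus_{n\ge1}\mathcal X^{\otimes_{\mathcal C}n}$ with creation operators $\ell(\xi)$. For a loop $e$: $X_e=\ell(\epsilon)+\ell(\epsilon)^*$; for $e$ with endpoints $\alpha\ne\beta$: $a_\epsilon=(\mu(\alpha)/\mu(\beta))^{1/4}$, $X_e=a_\epsilon\ell(\epsilon)+a_\epsilon^{-1}\ell(\epsilon^{op})^*+a_\epsilon^{-1}\ell(\epsilon^{op})+a_\epsilon\ell(\epsilon)^*$. For a directed edge $\epsilon$ arising from $e$, $X_\epsilon=p_{s(\epsilon)}X_ep_{t(\epsilon)}$.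 $\mathrm{Tr}=\mathrm{tr}\circ E$, where $E(x)=PxP$ with $P$ the projection of $\mathcal F(\mathcal X)$ onto $\mathcal C$ and $\mathrm{tr}(p_v)=\mu(v)$. Empty products $X_{\epsilon_i}\cdots X_{\epsilon_j}$ (if any arise) are interpreted as the appropriate vertex projection. *)

theory Defs
  imports "HOL-Analysis.Analysis"
begin

text \<open>Undirected multigraph: edge type 'e, vertex type 'v (V = UNIV), each edge has
  one (loop) or two endpoints given by ends.\<close>

definition multigraph :: "('e \<Rightarrow> 'v set) \<Rightarrow> bool" where
  "multigraph ends \<longleftrightarrow> (\<forall>e. \<exists>\<alpha> \<beta>. ends e = {\<alpha>, \<beta>})"

definition locally_finite_graph :: "('e \<Rightarrow> 'v set) \<Rightarrow> bool" where
  "locally_finite_graph ends \<longleftrightarrow> (\<forall>v. finite {e. v \<in> ends e})"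

definition graph_connected :: "('e \<Rightarrow> 'v set) \<Rightarrow> bool" where
  "graph_connected ends \<longleftrightarrow>
     (\<forall>u v. (u, v) \<in> {(a, b). \<exists>e. ends e = {a, b}}\<^sup>*)"

text \<open>Directed edges: a pair (e, alpha) with alpha an endpoint of e, oriented out of alpha.
  A loop gives exactly one directed edge.\<close>

definition is_dedge :: "('e \<Rightarrow> 'v set) \<Rightarrow> 'e \<times> 'v \<Rightarrow> bool" where
  "is_dedge ends d \<longleftrightarrow> snd d \<in> ends (fst d)"

definition src :: "'e \<times> 'v \<Rightarrow> 'v" where
  "src d = snd d"

definition tgt :: "('e \<Rightarrow> 'v set) \<Rightarrow> 'e \<times> 'v \<Rightarrow> 'v" where
  "tgt ends d = (SOME \<beta>. ends (fst d) = {snd d, \<beta>})"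

definition opp :: "('e \<Rightarrow> 'v set) \<Rightarrow> 'e \<times> 'v \<Rightarrow> 'e \<times> 'v" where
  "opp ends d = (fst d, tgt ends d)"

text \<open>Algebraic Fock space: basis elements (v, w), where (v, []) is p_v in C and
  (v, d1 # ... # dk) is the elementary tensor d1 (x) ... (x) dk (a path starting at v).\<close>

type_synonym ('v, 'e) fvec = "('v \<times> ('e \<times> 'v) list) \<Rightarrow> real"
type_synonym ('v, 'e) fop = "('v, 'e) fvec \<Rightarrow> ('v, 'e) fvec"

text \<open>Creation operator l(d): xi \<mapsto> d (x) xi.\<close>
definition create :: "('e \<Rightarrow> 'v set) \<Rightarrow> 'e \<times> 'v \<Rightarrow> ('v, 'e) fop" where
  "create ends d x = (\<lambda>(v, w). case w of [] \<Rightarrow> 0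
      | d' # w' \<Rightarrow> (if d' = d \<and> v = src d then x (tgt ends d, w') else 0))"

text \<open>Annihilation operator l(d)^*: d' (x) xi \<mapsto> <d|d'> xi, and C \<mapsto> 0.\<close>
definition annih :: "('e \<Rightarrow> 'v set) \<Rightarrow> 'e \<times> 'v \<Rightarrow> ('v, 'e) fop" where
  "annih ends d x = (\<lambda>(v, w). if v = tgt ends d then x (src d, d # w) else 0)"

definition proj :: "'v \<Rightarrow> ('v, 'e) fop" where
  "proj \<alpha> x = (\<lambda>(v, w). if v = \<alpha> then x (v, w) else 0)"

definition coef_a :: "('e \<Rightarrow> 'v set) \<Rightarrow> ('v \<Rightarrow> real) \<Rightarrow> 'e \<times> 'v \<Rightarrow> real" where
  "coef_a ends mu d = (mu (src d) / mu (tgt ends d)) powr (1/4)"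

definition Xedge :: "('e \<Rightarrow> 'v set) \<Rightarrow> ('v \<Rightarrow> real) \<Rightarrow> 'e \<Rightarrow> ('v, 'e) fop" where
  "Xedge ends mu e x =
    (let d = (e, SOME \<alpha>. \<alpha> \<in> ends e); a = coef_a ends mu d in
     if src d = tgt ends d
     then (\<lambda>b. create ends d x b + annih ends d x b)
     else (\<lambda>b. a * create ends d x b + inverse a * annih ends (opp ends d) x b
              + inverse a * create ends (opp ends d) x b + a * annih ends d x b))"

definition Xdir :: "('e \<Rightarrow> 'v set) \<Rightarrow> ('v \<Rightarrow> real) \<Rightarrow> 'e \<times> 'v \<Rightarrow> ('v, 'e) fop" where
  "Xdir ends mu d = proj (src d) \<circ> Xedge ends mu (fst d) \<circ> proj (tgt ends d)"

text \<open>Product X_{d1} ... X_{dk} (empty product = identity; never used in the theorem).\<close>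
definition Xword :: "('e \<Rightarrow> 'v set) \<Rightarrow> ('v \<Rightarrow> real) \<Rightarrow> ('e \<times> 'v) list \<Rightarrow> ('v, 'e) fop" where
  "Xword ends mu ds = foldr (\<circ>) (map (Xdir ends mu) ds) id"

definition vac :: "'v \<Rightarrow> ('v, 'e) fvec" where
  "vac u = (\<lambda>b. if b = (u, []) then 1 else 0)"

text \<open>Tr = tr o E with E(x) = PxP, i.e. E(x) = sum_u <p_u, x p_u> p_u, tr(p_u) = mu u.\<close>
definition Tr :: "('v \<Rightarrow> real) \<Rightarrow> ('v, 'e) fop \<Rightarrow> real" where
  "Tr mu T = (\<Sum>\<^sub>\<infinity>u. mu u * T (vac u) (u, []))"

end

theory Submission
  imports Defs
begin

lemma tgt_prop:
  assumes mg: "multigraph ends" and dd: "is_dedge ends d"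
  shows "ends (fst d) = {src d, tgt ends d}"
proof -
  obtain a b where ab: "ends (fst d) = {a, b}" using mg unfolding multigraph_def by blast
  have "snd d \<in> {a,b}" using dd ab by (simp add: is_dedge_def)
  then have ex: "\<exists>\<beta>. ends (fst d) = {snd d, \<beta>}" using ab by auto
  show ?thesis unfolding tgt_def src_def using someI_ex[OF ex] by simp
qed

lemma tgt_eqI:
  assumes mg: "multigraph ends" and dd: "is_dedge ends d" and "ends (fst d) = {src d, b}"
  shows "tgt ends d = b"
proof -
  have "{src d, tgt ends d} = {src d, b}" using tgt_prop[OF mg dd] assms(3) by simp
  thus ?thesis unfolding doubleton_eq_iff by blast
qed

lemma opp_facts:
  assumes mg: "multigraph ends" and dd: "is_dedge ends d"
  shows "src (opp ends d) = tgt ends d" "is_dedge ends (opp ends d)"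
    "tgt ends (opp ends d) = src d" "opp ends (opp ends d) = d"
proof -
  show 1: "src (opp ends d) = tgt ends d" by (simp add: src_def opp_def)
  show 2: "is_dedge ends (opp ends d)" using tgt_prop[OF mg dd] by (simp add: is_dedge_def opp_def)
  show 3: "tgt ends (opp ends d) = src d"
    by (rule tgt_eqI[OF mg 2]) (use tgt_prop[OF mg dd] 1 in \<open>auto simp: opp_def\<close>)
  show "opp ends (opp ends d) = d" using 3 by (simp add: opp_def src_def)
qed

lemma coef_opp:
  assumes mg: "multigraph ends" and dd: "is_dedge ends d" and mu: "\<forall>v. mu v > 0"
  shows "coef_a ends mu (opp ends d) = inverse (coef_a ends mu d)"
  using opp_facts[OF mg dd] mu
  by (simp add: coef_a_def powr_divide less_imp_le)

lemma coef_pos: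
  assumes mu: "\<forall>v. mu v > 0"
  shows "coef_a ends mu d > 0"
proof -
  have "mu (src d) > 0" "mu (tgt ends d) > 0" using mu by auto
  thus ?thesis by (simp add: coef_a_def)
qed

lemma coef_sq:
  assumes mu: "\<forall>v. mu v > 0"
  shows "coef_a ends mu d * coef_a ends mu d = sqrt (mu (src d) / mu (tgt ends d))"
proof -
  have p: "mu (src d) / mu (tgt ends d) > 0" using mu by simp
  have "coef_a ends mu d * coef_a ends mu d = (mu (src d) / mu (tgt ends d)) powr (1/4 + 1/4)"
    unfolding coef_a_def by (rule powr_add[symmetric])
  also have "\<dots> = sqrt (mu (src d) / mu (tgt ends d))"
    using p by (simp add: powr_half_sqrt[symmetric])
  finally show ?thesis .
qed

lemma Xdir_eq:
  assumes mg: "multigraph ends" and dd: "is_dedge ends d" and mu: "\<forall>v. mu v > 0"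
  shows "Xdir ends mu d x (v,w) = (if v = src d then
     coef_a ends mu d * (case w of [] \<Rightarrow> 0 | d'#w' \<Rightarrow> if d' = d then x (tgt ends d, w') else 0)
     + inverse (coef_a ends mu d) * x (tgt ends d, opp ends d # w) else 0)"
proof -
  define e where "e = fst d"
  define a0 where "a0 = (SOME \<alpha>. \<alpha> \<in> ends e)"
  define d0 where "d0 = (e, a0)"
  have "snd d \<in> ends e" using dd by (simp add: is_dedge_def e_def)
  hence "a0 \<in> ends e" unfolding a0_def by (rule someI)
  hence dd0: "is_dedge ends d0" by (simp add: is_dedge_def d0_def)
  have e0: "ends e = {src d0, tgt ends d0}" using tgt_prop[OF mg dd0] by (simp add: d0_def)
  have "snd d \<in> {src d0, tgt ends d0}" using dd e0 by (simp add: is_dedge_def e_def)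
  hence dcases: "d = d0 \<or> d = opp ends d0"
    by (auto simp: d0_def opp_def src_def e_def prod_eq_iff)
  have XE: "\<And>y b. Xedge ends mu e y b = (let a = coef_a ends mu d0 in
     if src d0 = tgt ends d0
     then create ends d0 y b + annih ends d0 y b
     else a * create ends d0 y b + inverse a * annih ends (opp ends d0) y b
              + inverse a * create ends (opp ends d0) y b + a * annih ends d0 y b)"
    by (simp add: Xedge_def Let_def d0_def a0_def)
  note of0 = opp_facts[OF mg dd0]
  have Xd: "Xdir ends mu d x (v,w) = (if v = src d then Xedge ends mu e (proj (tgt ends d) x) (v,w) else 0)"
    by (simp add: Xdir_def proj_def e_def)
  show ?thesis
  proof (cases "src d0 = tgt ends d0")
    case True
    have dd0': "d = d0" using dcases True of0 by (auto simp: opp_def src_def d0_def)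
    have od: "opp ends d0 = d0" using True by (simp add: opp_def d0_def src_def)
    have "mu (tgt ends d0) > 0" using mu by simp
    hence c1: "coef_a ends mu d0 = 1" using True by (simp add: coef_a_def)
    show ?thesis unfolding Xd XE unfolding dd0' using True od c1
      by (cases w) (auto simp: create_def annih_def proj_def Let_def)
  next
    case False
    from dcases show ?thesis
    proof
      assume dd0': "d = d0"
      show ?thesis unfolding Xd XE unfolding dd0' using False of0
        by (cases w) (auto simp: create_def annih_def proj_def Let_def)
    next
      assume dd0': "d = opp ends d0"
      show ?thesis unfolding Xd XE unfolding dd0' using False of0 coef_opp[OF mg dd0 mu]
        by (cases w) (auto simp: create_def annih_def proj_def Let_def)
    qed
  qed
qed

fun amp :: "('e \<Rightarrow> 'v set) \<Rightarrow> ('v \<Rightarrow> real) \<Rightarrow> ('e \<times> 'v) list \<Rightarrow> ('e \<times> 'v) list \<Rightarrow> (('e \<times> 'v) list \<Rightarrow> real) \<Rightarrow> real" where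
  "amp ends mu [] w f = f w"
| "amp ends mu (d # ds) w f =
     coef_a ends mu d * (case w of [] \<Rightarrow> 0 | d' # w' \<Rightarrow> if d' = d then amp ends mu ds w' f else 0)
     + inverse (coef_a ends mu d) * amp ends mu ds (opp ends d # w) f"

lemma amp_append: "amp ends mu (xs @ ys) w f = amp ends mu xs w (\<lambda>w'. amp ends mu ys w' f)"
  by (induction xs arbitrary: w) (auto split: list.split)

lemma amp_lin: "amp ends mu xs w (\<lambda>w'. c * f w' + c' * g w') = c * amp ends mu xs w f + c' * amp ends mu xs w g"
  by (induction xs arbitrary: w) (auto split: list.split simp: algebra_simps)

definition Q where "Q ends mu xs s = amp ends mu xs [] (\<lambda>w. if w = s then 1 else 0)"

lemma Q_nil: "Q ends mu [] s = (if s = [] then 1 else 0)"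
  by (simp add: Q_def)

lemma Q_snoc: "Q ends mu (ys @ [y]) t = coef_a ends mu y * Q ends mu ys (y # t)
   + inverse (coef_a ends mu y) * (case t of [] \<Rightarrow> 0 | t0 # t' \<Rightarrow> if t0 = opp ends y then Q ends mu ys t' else 0)"
proof -
  have "Q ends mu (ys @ [y]) t = amp ends mu ys [] (\<lambda>w. amp ends mu [y] w (\<lambda>w. if w = t then 1 else 0))"
    by (simp add: Q_def amp_append)
  also have "(\<lambda>w. amp ends mu [y] w (\<lambda>w. if w = t then 1 else 0)) =
     (\<lambda>w. coef_a ends mu y * (if w = y # t then 1 else 0) + inverse (coef_a ends mu y) *
        (case t of [] \<Rightarrow> 0 | t0 # t' \<Rightarrow> if t0 = opp ends y then (if w = t' then 1 else 0) else 0))"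
    by (auto split: list.split)
  also have "amp ends mu ys [] \<dots> = coef_a ends mu y * Q ends mu ys (y # t)
   + inverse (coef_a ends mu y) * amp ends mu ys [] (\<lambda>w. case t of [] \<Rightarrow> 0 | t0 # t' \<Rightarrow> if t0 = opp ends y then (if w = t' then 1 else 0) else 0)"
    by (subst amp_lin[where c'="inverse (coef_a ends mu y)" and c="coef_a ends mu y"]) (simp add: Q_def)
  also have "amp ends mu ys [] (\<lambda>w. case t of [] \<Rightarrow> 0 | t0 # t' \<Rightarrow> if t0 = opp ends y then (if w = t' then 1 else 0) else 0)
     = (case t of [] \<Rightarrow> 0 | t0 # t' \<Rightarrow> if t0 = opp ends y then Q ends mu ys t' else 0)"
  proof (cases t)
    case Nil
    then show ?thesis using amp_lin[of ends mu ys "[]" 0 "\<lambda>_. 0" 0 "\<lambda>_. 0"] by simp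
  next
    case (Cons t0 t')
    then show ?thesis using amp_lin[of ends mu ys "[]" 0 "\<lambda>_. 0" 0 "\<lambda>_. 0"] by (simp add: Q_def)
  qed
  finally show ?thesis .
qed

lemma Q_split:
  "Q ends mu xs (s @ [c]) = (\<Sum>j<length xs. if opp ends (xs ! j) = c then
      Q ends mu (take j xs) [] * inverse (coef_a ends mu (xs ! j)) * Q ends mu (drop (Suc j) xs) s else 0)"
proof (induction xs arbitrary: s rule: rev_induct)
  case Nil
  then show ?case by (simp add: Q_nil)
next
  case (snoc y ys)
  let ?a = "coef_a ends mu y"
  define F where "F s j = (if opp ends (ys ! j) = c then
      Q ends mu (take j ys) [] * inverse (coef_a ends mu (ys ! j)) * Q ends mu (drop (Suc j) ys) s else 0)" for s j
  have IH: "\<And>s. Q ends mu ys (s @ [c]) = (\<Sum>j<length ys. F s j)" using snoc.IH by (simp add: F_def)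
  have lastterm: "(if opp ends ((ys @ [y]) ! length ys) = c then
      Q ends mu (take (length ys) (ys @ [y])) [] * inverse (coef_a ends mu ((ys @ [y]) ! length ys)) *
      Q ends mu (drop (Suc (length ys)) (ys @ [y])) s else 0)
      = (if opp ends y = c \<and> s = [] then Q ends mu ys [] * inverse ?a else 0)"
    by (simp add: Q_nil)
  have midterm: "\<And>j. j < length ys \<Longrightarrow> (if opp ends ((ys @ [y]) ! j) = c then
      Q ends mu (take j (ys @ [y])) [] * inverse (coef_a ends mu ((ys @ [y]) ! j)) *
      Q ends mu (drop (Suc j) (ys @ [y])) s else 0)
      = ?a * F (y # s) j + inverse ?a * (case s of [] \<Rightarrow> 0 | t0 # t' \<Rightarrow> if t0 = opp ends y then F t' j else 0)"
    by (simp add: nth_append F_def Q_snoc split: list.split) (simp add: algebra_simps)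
  have "(\<Sum>j<length (ys @ [y]). if opp ends ((ys @ [y]) ! j) = c then
      Q ends mu (take j (ys @ [y])) [] * inverse (coef_a ends mu ((ys @ [y]) ! j)) *
      Q ends mu (drop (Suc j) (ys @ [y])) s else 0)
     = (\<Sum>j<length ys. ?a * F (y # s) j + inverse ?a * (case s of [] \<Rightarrow> 0 | t0 # t' \<Rightarrow> if t0 = opp ends y then F t' j else 0))
       + (if opp ends y = c \<and> s = [] then Q ends mu ys [] * inverse ?a else 0)"
    unfolding length_append_singleton sum.lessThan_Suc lastterm
    using midterm by (intro arg_cong2[where f="(+)"] sum.cong) auto
  also have "\<dots> = ?a * Q ends mu ys ((y # s) @ [c]) + inverse ?a * (case s of [] \<Rightarrow> 0 | t0 # t' \<Rightarrow> if t0 = opp ends y then Q ends mu ys (t' @ [c]) else 0)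
       + (if opp ends y = c \<and> s = [] then Q ends mu ys [] * inverse ?a else 0)"
  proof (cases s)
    case Nil
    have h: "Q ends mu ys [y, c] = (\<Sum>j<length ys. F [y] j)" using IH[of "[y]"] by simp
    show ?thesis using Nil h by (simp add: sum_distrib_left)
  next
    case (Cons s0 s1)
    have h1: "Q ends mu ys (y # s0 # s1 @ [c]) = (\<Sum>j<length ys. F (y # s0 # s1) j)"
      using IH[of "y # s0 # s1"] by simp
    have h2: "Q ends mu ys (s1 @ [c]) = (\<Sum>j<length ys. F s1 j)" using IH[of s1] .
    show ?thesis using Cons h1 h2 by (cases "s0 = opp ends y") (simp_all add: sum.distrib sum_distrib_left)
  qed
  also have "\<dots> = Q ends mu (ys @ [y]) (s @ [c])"
    by (cases s) (auto simp: Q_snoc)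
  finally show ?case by simp
qed

definition validw where
  "validw ends ds \<longleftrightarrow> (\<forall>d\<in>set ds. is_dedge ends d) \<and>
     (\<forall>k. Suc k < length ds \<longrightarrow> tgt ends (ds ! k) = src (ds ! Suc k))"

lemma Xword_cons: "Xword ends mu (d # ds) = Xdir ends mu d \<circ> Xword ends mu ds"
  by (simp add: Xword_def)

lemma Xword_amp:
  assumes mg: "multigraph ends" and mu: "\<forall>v. mu v > 0"
  shows "ds \<noteq> [] \<Longrightarrow> validw ends ds \<Longrightarrow> Xword ends mu ds x (v, w) =
    (if v = src (hd ds) then amp ends mu ds w (\<lambda>w'. x (tgt ends (last ds), w')) else 0)"
proof (induction ds arbitrary: v w)
  case Nil
  then show ?case by simp
next
  case (Cons d ds)
  have dd: "is_dedge ends d" using Cons.prems by (simp add: validw_def)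
  show ?case
  proof (cases "ds = []")
    case True
    then show ?thesis by (simp add: Xword_cons Xdir_eq[OF mg dd mu] Xword_def split: list.split)
  next
    case False
    have v: "validw ends ds" using Cons.prems(2) unfolding validw_def by fastforce
    have tg: "tgt ends d = src (hd ds)" using Cons.prems(2) False
      unfolding validw_def by (cases ds) auto
    have IH: "\<And>v w. Xword ends mu ds x (v, w) =
      (if v = src (hd ds) then amp ends mu ds w (\<lambda>w'. x (tgt ends (last ds), w')) else 0)"
      using Cons.IH[OF False v] .
    show ?thesis using False
      by (simp add: Xword_cons Xdir_eq[OF mg dd mu] IH tg split: list.split)
  qed
qed

lemma Tr_Q:
  assumes mg: "multigraph ends" and mu: "\<forall>v. mu v > 0"
    and ne: "ds \<noteq> []" and v: "validw ends ds" and cl: "tgt ends (last ds) = src (hd ds)"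
  shows "Tr mu (Xword ends mu ds) = mu (src (hd ds)) * Q ends mu ds []"
proof -
  let ?s = "src (hd ds)"
  have eq: "mu u * Xword ends mu ds (vac u) (u, []) = (if u = ?s then mu ?s * Q ends mu ds [] else 0)" for u
    using Xword_amp[OF mg mu ne v, of "vac u" u "[]"] cl
    by (simp add: vac_def Q_def)
  have "Tr mu (Xword ends mu ds) = infsum (\<lambda>u. if u = ?s then mu ?s * Q ends mu ds [] else 0) UNIV"
    unfolding Tr_def eq ..
  also have "\<dots> = infsum (\<lambda>u. mu ?s * Q ends mu ds []) {?s}"
    by (rule infsum_cong_neutral) auto
  also have "\<dots> = mu ?s * Q ends mu ds []" by simp
  finally show ?thesis .
qed

lemma sum_shift1: "(\<Sum>j<m. g (Suc j)) = (\<Sum>k\<in>{1..m}. (g k :: real))"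
  by (induction m) (auto simp: atLeastAtMostSuc_conv)

lemma sqrt_aux1:
  assumes "x > 0" "y > 0"
  shows "y * sqrt (x / y) = sqrt (x * y)"
proof -
  have "sqrt (x * y) = sqrt ((y * y) * (x / y))"
    by (rule arg_cong[where f=sqrt]) (use assms in \<open>simp add: field_simps\<close>)
  also have "\<dots> = sqrt (y * y) * sqrt (x / y)" by (rule real_sqrt_mult)
  also have "sqrt (y * y) = y" using assms by simp
  finally show ?thesis by simp
qed

theorem lemma2p6:
  fixes ends :: "'e \<Rightarrow> 'v set" and mu :: "'v \<Rightarrow> real"
    and eps :: "nat \<Rightarrow> 'e \<times> 'v" and n :: nat
  assumes "multigraph ends"
    and "countable (UNIV :: 'v set)" and "countable (UNIV :: 'e set)"
    and "locally_finite_graph ends" and "graph_connected ends"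
    and "\<forall>v. mu v > 0"
    and "n \<ge> 3"
    and "\<forall>k\<in>{1..n}. is_dedge ends (eps k)"
    and "\<forall>k\<in>{1..<n}. tgt ends (eps k) = src (eps (Suc k))"
    and "tgt ends (eps n) = src (eps 1)"
  shows "Tr mu (Xword ends mu (map eps [1..<n+1])) =
      1 / sqrt (mu (src (eps n)) * mu (tgt ends (eps n))) *
        (\<Sum>j\<in>{j. 1 \<le> j \<and> j \<le> n - 1 \<and> eps j = opp ends (eps n) \<and> j \<notin> {1, n - 1}}.
            Tr mu (Xword ends mu (map eps [1..<j])) * Tr mu (Xword ends mu (map eps [j+1..<n])))
    + (if eps (n - 1) = opp ends (eps n)
       then sqrt (mu (src (eps n)) / mu (tgt ends (eps n))) * Tr mu (Xword ends mu (map eps [1..<n-1]))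
       else 0)
    + (if eps 1 = opp ends (eps n)
       then sqrt (mu (tgt ends (eps n)) / mu (src (eps n))) * Tr mu (Xword ends mu (map eps [2..<n]))
       else 0)"
proof -
  note mg = assms(1) and mu = assms(6) and n3 = assms(7) and V = assms(8) and C = assms(9) and L = assms(10)
  have validI: "validw ends (map eps [k..<l])" if "1 \<le> k" "l \<le> n + 1" for k l
  proof -
    have "\<forall>d\<in>set (map eps [k..<l]). is_dedge ends d" using V that by auto
    moreover have "tgt ends (map eps [k..<l] ! j) = src (map eps [k..<l] ! Suc j)"
      if "Suc j < length (map eps [k..<l])" for j
    proof -
      have "k + j \<in> {1..<n}" using that \<open>1 \<le> k\<close> \<open>l \<le> n + 1\<close> by auto
      then show ?thesis using C that by auto
    qed
    ultimately show ?thesis unfolding validw_def by blast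
  qed
  have TrI: "Tr mu (Xword ends mu (map eps [k..<l])) = mu (src (eps k)) * Q ends mu (map eps [k..<l]) []"
    if "1 \<le> k" "k < l" "l \<le> n + 1" "tgt ends (eps (l - 1)) = src (eps k)" for k l
  proof -
    have ne: "map eps [k..<l] \<noteq> []" using that by simp
    have h: "hd (map eps [k..<l]) = eps k" using that by (simp add: hd_map)
    have la: "last (map eps [k..<l]) = eps (l - 1)" using that by (simp add: last_map)
    show ?thesis using Tr_Q[OF mg mu ne validI[OF that(1,3)]] h la that(4) by simp
  qed
  define c where "c = eps n"
  define p where "p = opp ends c"
  define s where "s = src c"
  define t where "t = tgt ends c"
  define a where "a = coef_a ends mu c"
  have vc: "is_dedge ends c" using V n3 by (simp add: c_def)
  note oc = opp_facts[OF mg vc]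
  have vp: "is_dedge ends p" and sp: "src p = t" and tp: "tgt ends p = s" and opc: "opp ends p = c"
    using oc by (simp_all add: p_def s_def t_def)
  have ap: "coef_a ends mu p = inverse a" using coef_opp[OF mg vc mu] by (simp add: p_def a_def)
  have apos: "a > 0" using coef_pos[OF mu] by (simp add: a_def)
  have asq: "a * a = sqrt (mu s / mu t)" using coef_sq[OF mu] by (simp add: a_def s_def t_def)
  have mus: "mu s > 0" and mut: "mu t > 0" using mu by auto
  have s1: "src (eps 1) = t" using L by (simp add: t_def c_def)
  define xs where "xs = map eps [1..<n]"
  have full: "map eps [1..<n+1] = xs @ [c]" using n3 by (simp add: xs_def c_def)
  have lenxs: "length xs = n - 1" by (simp add: xs_def)
  define g where "g k = (if eps k = p then a * Q ends mu (map eps [1..<k]) [] * Q ends mu (map eps [k+1..<n]) [] else 0)" for k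
  have oppiff: "opp ends (eps k) = c \<longleftrightarrow> eps k = p" if "k \<in> {1..n}" for k
    using opp_facts(4)[OF mg V[rule_format, OF that]] opc by (auto simp: p_def)
  have trm: "(if opp ends (xs ! j) = c then Q ends mu (take j xs) [] * inverse (coef_a ends mu (xs ! j)) *
      Q ends mu (drop (Suc j) xs) [] else 0) = g (Suc j)" if "j < n - 1" for j
  proof -
    have xj: "xs ! j = eps (Suc j)" using that by (simp add: xs_def)
    have tk: "take j xs = map eps [1..<Suc j]" using that by (simp add: xs_def take_map)
    have dr: "drop (Suc j) xs = map eps [Suc j + 1..<n]" by (simp add: xs_def drop_map)
    have "Suc j \<in> {1..n}" using that by auto
    then show ?thesis unfolding xj tk dr g_def using oppiff ap apos by auto
  qed
  have QQ: "Q ends mu (xs @ [c]) [] = a * (\<Sum>k\<in>{1..n-1}. g k)"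
  proof -
    have "Q ends mu (xs @ [c]) [] = a * Q ends mu xs ([] @ [c])" by (simp add: Q_snoc a_def)
    also have "Q ends mu xs ([] @ [c]) = (\<Sum>j<n-1. g (Suc j))"
      unfolding Q_split lenxs using trm by (intro sum.cong) auto
    finally show ?thesis by (simp add: sum_shift1)
  qed
  have LHS: "Tr mu (Xword ends mu (map eps [1..<n+1])) = mu t * a * (\<Sum>k\<in>{1..n-1}. g k)"
    using TrI[of 1 "n+1"] n3 L s1 full QQ by (simp add: c_def)
  have split: "{1..n-1} = insert 1 (insert (n-1) {2..n-2})" using n3 by auto
  have sumsplit: "(\<Sum>k\<in>{1..n-1}. g k) = g 1 + g (n-1) + (\<Sum>k\<in>{2..n-2}. g k)"
  proof -
    have n1: "n - 1 \<notin> {2..n-2}" "1 \<notin> insert (n-1) {2..n-2}" using n3 by auto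
    show ?thesis unfolding split using n1 by (simp add: sum.insert)
  qed
  have seteq: "{j. 1 \<le> j \<and> j \<le> n - 1 \<and> eps j = p \<and> j \<notin> {1, n - 1}} = {k\<in>{2..n-2}. eps k = p}"
    using n3 by auto
  have key: "1 / sqrt (mu s * mu t) * (mu t * mu s) = mu t * (a * a)"
  proof -
    have q: "mu s * mu t \<ge> 0" using mus mut by simp
    have "1 / sqrt (mu s * mu t) * (mu t * mu s) = (mu s * mu t) / sqrt (mu s * mu t)"
      by (simp add: mult.commute)
    also have "\<dots> = sqrt (mu s * mu t)" using q by (rule real_div_sqrt)
    also have "\<dots> = mu t * sqrt (mu s / mu t)" using sqrt_aux1[OF mus mut] by simp
    finally show ?thesis by (simp add: asq)
  qed
  have mid: "1 / sqrt (mu s * mu t) * (if eps k = p then Tr mu (Xword ends mu (map eps [1..<k])) * Tr mu (Xword ends mu (map eps [k+1..<n])) else 0)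
     = mu t * a * g k" if "k \<in> {2..n-2}" for k
  proof (cases "eps k = p")
    case True
    have k1: "k - 1 \<in> {1..<n}" "Suc (k - 1) = k" using that by auto
    from C k1(1) have "tgt ends (eps (k - 1)) = src (eps (Suc (k - 1)))" by blast
    hence c1: "tgt ends (eps (k - 1)) = src (eps 1)" using k1(2) True sp s1 by simp
    have "k \<in> {1..<n}" using that by auto
    with C have "tgt ends (eps k) = src (eps (Suc k))" by blast
    hence sk: "src (eps (k+1)) = s" using True tp by simp
    have n1: "n - 1 \<in> {1..<n}" "Suc (n - 1) = n" using n3 by auto
    from C n1(1) have "tgt ends (eps (n - 1)) = src (eps (Suc (n - 1)))" by blast
    hence c2: "tgt ends (eps (n - 1)) = src (eps (k+1))" using n1(2) sk by (simp add: s_def c_def)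
    have T1: "Tr mu (Xword ends mu (map eps [1..<k])) = mu t * Q ends mu (map eps [1..<k]) []"
      using TrI[of 1 k] that c1 s1 by auto
    have T2: "Tr mu (Xword ends mu (map eps [k+1..<n])) = mu s * Q ends mu (map eps [k+1..<n]) []"
      using TrI[of "k+1" n] that c2 sk by auto
    define r where "r = 1 / sqrt (mu s * mu t)"
    define Q1 where "Q1 = Q ends mu (map eps [1..<k]) []"
    define Q2 where "Q2 = Q ends mu (map eps [k+1..<n]) []"
    have "r * (mu t * Q1 * (mu s * Q2)) = (r * (mu t * mu s)) * (Q1 * Q2)" by (simp only: mult_ac)
    also have "\<dots> = (mu t * (a * a)) * (Q1 * Q2)" using key by (simp only: r_def)
    also have "\<dots> = mu t * a * (a * Q1 * Q2)" by (simp only: mult_ac)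
    finally have fin: "r * (mu t * Q1 * (mu s * Q2)) = mu t * a * (a * Q1 * Q2)" .
    show ?thesis using True fin unfolding T1 T2 g_def r_def Q1_def Q2_def by simp
  next
    case False
    then show ?thesis by (simp add: g_def)
  qed
  have gn1: "(if eps (n - 1) = p then sqrt (mu s / mu t) * Tr mu (Xword ends mu (map eps [1..<n-1])) else 0) = mu t * a * g (n-1)"
  proof (cases "eps (n - 1) = p")
    case True
    have a1: "n - 1 - 1 \<in> {1..<n}" "Suc (n - 1 - 1) = n - 1" using n3 by auto
    from C a1(1) have "tgt ends (eps (n - 1 - 1)) = src (eps (Suc (n - 1 - 1)))" by blast
    hence hh: "tgt ends (eps (n - 1 - 1)) = src (eps 1)" using a1(2) True sp s1 by simp
    have T1: "Tr mu (Xword ends mu (map eps [1..<n-1])) = mu t * Q ends mu (map eps [1..<n-1]) []"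
      using TrI[of 1 "n-1"] n3 s1 hh by auto
    have e3: "n - 1 + 1 = n" using n3 by simp
    define Q1 where "Q1 = Q ends mu (map eps [1..<n-1]) []"
    have "a * a * (mu t * Q1) = mu t * a * (a * Q1 * 1)" by (simp only: mult_ac mult_1_right)
    then show ?thesis using True unfolding T1 g_def asq[symmetric] e3 Q1_def by (simp add: Q_nil)
  qed (simp add: g_def)
  have g1: "(if eps 1 = p then sqrt (mu t / mu s) * Tr mu (Xword ends mu (map eps [2..<n])) else 0) = mu t * a * g 1"
  proof (cases "eps 1 = p")
    case True
    have "1 \<in> {1..<n}" using n3 by auto
    with C have "tgt ends (eps 1) = src (eps (Suc 1))" by blast
    hence s2: "src (eps 2) = s" using True tp by (simp add: numeral_2_eq_2)
    have n1: "n - 1 \<in> {1..<n}" "Suc (n - 1) = n" using n3 by auto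
    from C n1(1) have "tgt ends (eps (n - 1)) = src (eps (Suc (n - 1)))" by blast
    hence c2: "tgt ends (eps (n - 1)) = src (eps 2)" using n1(2) s2 by (simp add: s_def c_def)
    have T2: "Tr mu (Xword ends mu (map eps [2..<n])) = mu s * Q ends mu (map eps [2..<n]) []"
      using TrI[of 2 n] n3 c2 s2 by auto
    have e: "sqrt (mu t / mu s) * mu s = mu t * (a * a)"
      unfolding asq using sqrt_aux1[OF mus mut] sqrt_aux1[OF mut mus] by (simp add: mult.commute)
    define Q2 where "Q2 = Q ends mu (map eps [2..<n]) []"
    have "sqrt (mu t / mu s) * (mu s * Q2) = (sqrt (mu t / mu s) * mu s) * Q2" by (simp only: mult_ac)
    also have "\<dots> = mu t * a * (a * 1 * Q2)" unfolding e by (simp only: mult_ac mult_1_right)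
    finally have fin: "sqrt (mu t / mu s) * (mu s * Q2) = mu t * a * (a * 1 * Q2)" .
    have e2: "[1 + 1..<n] = [2..<n]" by (simp add: numeral_2_eq_2)
    show ?thesis using True fin unfolding T2 g_def Q2_def e2 by (simp add: Q_nil)
  qed (simp add: g_def)
  have midsum: "1 / sqrt (mu s * mu t) * (\<Sum>k\<in>{k\<in>{2..n-2}. eps k = p}. Tr mu (Xword ends mu (map eps [1..<k])) * Tr mu (Xword ends mu (map eps [k+1..<n])))
     = (\<Sum>k\<in>{2..n-2}. mu t * a * g k)"
  proof -
    have "(\<Sum>k\<in>{k\<in>{2..n-2}. eps k = p}. Tr mu (Xword ends mu (map eps [1..<k])) * Tr mu (Xword ends mu (map eps [k+1..<n])))
      = (\<Sum>k\<in>{2..n-2}. if eps k = p then Tr mu (Xword ends mu (map eps [1..<k])) * Tr mu (Xword ends mu (map eps [k+1..<n])) else 0)"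
      by (rule sum.inter_filter) simp
    then have "1 / sqrt (mu s * mu t) * (\<Sum>k\<in>{k\<in>{2..n-2}. eps k = p}. Tr mu (Xword ends mu (map eps [1..<k])) * Tr mu (Xword ends mu (map eps [k+1..<n])))
      = (\<Sum>k\<in>{2..n-2}. 1 / sqrt (mu s * mu t) * (if eps k = p then Tr mu (Xword ends mu (map eps [1..<k])) * Tr mu (Xword ends mu (map eps [k+1..<n])) else 0))"
      by (simp only: sum_distrib_left)
    also have "\<dots> = (\<Sum>k\<in>{2..n-2}. mu t * a * g k)"
      by (rule sum.cong[OF refl]) (rule mid)
    finally show ?thesis .
  qed
  have eqs: "src (eps n) = s" "tgt ends (eps n) = t" "opp ends (eps n) = p"
    by (simp_all add: s_def t_def p_def c_def)
  have fin: "mu t * a * (g 1 + g (n - 1) + (\<Sum>k\<in>{2..n-2}. g k)) =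
     (\<Sum>k\<in>{2..n-2}. mu t * a * g k) + mu t * a * g (n-1) + mu t * a * g 1"
    by (simp add: distrib_left sum_distrib_left)
  show ?thesis
    unfolding eqs LHS seteq sumsplit midsum gn1 g1 fin ..
qed

end
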